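(* Let $A\geq1$ and $\varepsilon>0$ be fixed. Let $a,c\in\mathbb{Z}\setminus\{0\}$, $b\in\mathbb{Z}$ and $x_1,x_2\geq1$ be such that $|c|<x_2^{A}$. Then $$\#\{n\in\mathbb{Z}\cap[-x_1,x_1]:\ \gcd(an+b,c)>x_2\}\ll \frac{x_1\gcd(a,c)}{x_2^{1-\varepsilon}}+\tau(c),$$ where the implied constant depends only on $A$ and $\varepsilon$.
   Context: $\tau(c)$ denotes the number of positive divisors of $c$. *)

theory Defs
  imports "HOL-Analysis.Analysis"
begin

definition tau :: "int \<Rightarrow> nat" where
  "tau c = card {d::int. d > 0 \<and> d dvd c}"

end

theory Submission imports Defs "HOL-Computational_Algebra.Primes" begin

definition taun :: "nat \<Rightarrow> nat" where "taun n = card {d. d dvd n}"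

lemma taun_mult: assumes "a > 0" "b > 0" shows "taun (a*b) \<le> taun a * taun b"
proof -
  have "{d. d dvd a*b} \<subseteq> (\<lambda>(x,y). x*y) ` ({d. d dvd a} \<times> {d. d dvd b})"
  proof
    fix x assume "x \<in> {d. d dvd a*b}"
    then obtain u v where uv: "x = u * v" "u dvd a" "v dvd b" using division_decomp by blast
    show "x \<in> (\<lambda>(x,y). x*y) ` ({d. d dvd a} \<times> {d. d dvd b})"
      by (rule image_eqI[where x="(u,v)"]) (simp_all add: uv)
  qed
  then have "taun (a*b) \<le> card ((\<lambda>(x,y). x*y) ` ({d. d dvd a} \<times> {d. d dvd b}))"
    unfolding taun_def using assms by (intro card_mono) (auto intro!: finite_imageI)
  also have "\<dots> \<le> card ({d. d dvd a} \<times> {d. d dvd b})" by (rule card_image_le) (use assms in auto)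
  also have "\<dots> = taun a * taun b" unfolding taun_def by (simp add: card_cartesian_product)
  finally show ?thesis .
qed

lemma taun_primepow: assumes "prime p" shows "taun (p^e) \<le> e + 1"
proof -
  have "{d. d dvd p^e} \<subseteq> (\<lambda>i. p^i) ` {..e}" using divides_primepow_nat[OF assms] by auto
  then have "taun (p^e) \<le> card ((\<lambda>i. p^i) ` {..e})" unfolding taun_def by (intro card_mono) auto
  also have "\<dots> \<le> e + 1" using card_image_le[of "{..e}" "\<lambda>i. p^i"] by simp
  finally show ?thesis .
qed

lemma taun_prod: assumes "finite P" "\<And>p. p \<in> P \<Longrightarrow> f p > 0"
  shows "taun (\<Prod>p\<in>P. f p) \<le> (\<Prod>p\<in>P. taun (f p))"
  using assms
proof (induction P rule: finite_induct)
  case empty then show ?case by (simp add: taun_def)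
next
  case (insert x F)
  have "taun (\<Prod>p\<in>insert x F. f p) = taun (f x * (\<Prod>p\<in>F. f p))" using insert by simp
  also have "\<dots> \<le> taun (f x) * taun (\<Prod>p\<in>F. f p)"
    using insert by (intro taun_mult) (auto simp: prod_pos)
  also have "\<dots> \<le> taun (f x) * (\<Prod>p\<in>F. taun (f p))" using insert by simp
  also have "\<dots> = (\<Prod>p\<in>insert x F. taun (f p))" using insert by simp
  finally show ?case .
qed

lemma lin_exp: assumes "\<delta> > 0"
  shows "\<exists>C0\<ge>1. \<forall>e::nat. real e + 1 \<le> C0 * 2 powr (real e * \<delta>)"
proof (intro exI[of _ "max 1 (1/(\<delta>*ln 2))"] conjI allI)
  fix e :: nat
  let ?C = "max 1 (1/(\<delta>*ln 2))"
  have l: "\<delta> * ln 2 > 0" using assms by simp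
  have "2 powr (real e * \<delta>) = exp (real e * \<delta> * ln 2)" by (simp add: powr_def)
  also have "\<dots> \<ge> 1 + real e * \<delta> * ln 2" by (rule exp_ge_add_one_self)
  finally have h: "1 + real e * (\<delta> * ln 2) \<le> 2 powr (real e * \<delta>)" by (simp add: algebra_simps)
  have "1/(\<delta>*ln 2) * (\<delta> * ln 2) \<le> ?C * (\<delta> * ln 2)"
    using l by (intro mult_right_mono) auto
  moreover have "1/(\<delta>*ln 2) * (\<delta> * ln 2) = 1" using l assms by simp
  ultimately have "?C * (\<delta> * ln 2) \<ge> 1" by simp
  then have "real e * 1 \<le> real e * (?C * (\<delta> * ln 2))"
    by (intro mult_left_mono) auto
  then have "real e \<le> ?C * (real e * (\<delta> * ln 2))" by (simp add: ac_simps)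
  then have "real e + 1 \<le> ?C * (1 + real e * (\<delta> * ln 2))" by (simp add: algebra_simps)
  also have "\<dots> \<le> ?C * 2 powr (real e * \<delta>)" using h by (intro mult_left_mono) auto
  finally show "real e + 1 \<le> ?C * 2 powr (real e * \<delta>)" .
qed simp

lemma divisor_bound: assumes "\<delta> > 0"
  shows "\<exists>K>0. \<forall>n::nat. n > 0 \<longrightarrow> real (taun n) \<le> K * real n powr \<delta>"
proof -
  obtain C0 where C0: "C0 \<ge> 1" "\<And>e::nat. real e + 1 \<le> C0 * 2 powr (real e * \<delta>)"
    using lin_exp[OF assms] by blast
  define N where "N = nat \<lceil>2 powr (1/\<delta>)\<rceil>"
  define c where "c = (\<lambda>p::nat. if p < N then C0 else 1)"
  have pp: "real e + 1 \<le> c p * (real (p^e)) powr \<delta>" if p: "prime p" for p e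
  proof -
    have p2: "real p \<ge> 2" using prime_ge_2_nat[OF p] by simp
    have eq: "(real (p^e)) powr \<delta> = real p powr (real e * \<delta>)"
    proof -
      have "real (p^e) = real p powr real e" using p2 by (simp add: powr_realpow)
      then show ?thesis by (simp add: powr_powr)
    qed
    show ?thesis
    proof (cases "p < N")
      case True
      have "real e + 1 \<le> C0 * 2 powr (real e * \<delta>)" by (rule C0)
      also have "\<dots> \<le> C0 * real p powr (real e * \<delta>)"
        using C0 p2 assms by (intro mult_left_mono powr_mono2) auto
      finally show ?thesis using True eq by (simp add: c_def)
    next
      case False
      have "real p \<ge> 2 powr (1/\<delta>)" using False unfolding N_def by linarith
      then have "real p powr \<delta> \<ge> (2 powr (1/\<delta>)) powr \<delta>" using assms by (intro powr_mono2) auto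
      then have pd: "real p powr \<delta> \<ge> 2" using assms by (simp add: powr_powr)
      have "real e + 1 \<le> 2 ^ e"
        by (induction e) auto
      also have "\<dots> \<le> (real p powr \<delta>) ^ e" using pd by (intro power_mono) auto
      also have "\<dots> = real p powr (real e * \<delta>)" using p2
        by (simp add: powr_realpow[symmetric] powr_powr mult.commute)
      finally show ?thesis using False eq by (simp add: c_def)
    qed
  qed
  have "real (taun n) \<le> C0 ^ N * real n powr \<delta>" if n: "n > 0" for n
  proof -
    let ?P = "prime_factors n"
    let ?m = "\<lambda>p. multiplicity p n"
    have "taun n = taun (\<Prod>p\<in>?P. p ^ ?m p)" using prime_factorization_nat[OF n] by simp
    also have "\<dots> \<le> (\<Prod>p\<in>?P. taun (p ^ ?m p))"
      by (rule taun_prod) (auto simp: prime_gt_0_nat in_prime_factors_iff)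
    also have "\<dots> \<le> (\<Prod>p\<in>?P. ?m p + 1)"
      by (rule prod_mono) (auto simp: in_prime_factors_iff dest: taun_primepow[where e="multiplicity _ n"])
    finally have tn: "taun n \<le> (\<Prod>p\<in>?P. ?m p + 1)" .
    have "real (taun n) \<le> real (\<Prod>p\<in>?P. ?m p + 1)" using tn by (simp only: of_nat_le_iff)
    also have "\<dots> = (\<Prod>p\<in>?P. real (?m p) + 1)" by (simp add: of_nat_prod add.commute)
    also have "\<dots> \<le> (\<Prod>p\<in>?P. c p * real (p ^ ?m p) powr \<delta>)"
      by (rule prod_mono, rule conjI, simp, rule pp, simp add: in_prime_factors_iff)
    also have "\<dots> = (\<Prod>p\<in>?P. c p) * (\<Prod>p\<in>?P. real (p ^ ?m p) powr \<delta>)"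
      by (rule prod.distrib)
    also have "(\<Prod>p\<in>?P. real (p ^ ?m p) powr \<delta>) = real n powr \<delta>"
    proof -
      have "(\<Prod>p\<in>?P. real (p ^ ?m p) powr \<delta>) = (\<Prod>p\<in>?P. real (p ^ ?m p)) powr \<delta>"
        by (rule prod_powr_distrib[symmetric])
      also have "(\<Prod>p\<in>?P. real (p ^ ?m p)) = real n"
        unfolding of_nat_prod[symmetric] by (rule arg_cong[where f=real, OF prime_factorization_nat[OF n, symmetric]])
      finally show ?thesis .
    qed
    also have "(\<Prod>p\<in>?P. c p) \<le> C0 ^ N"
    proof -
      have "(\<Prod>p\<in>?P. c p) = (\<Prod>p\<in>?P \<inter> {p. p < N}. C0) * (\<Prod>p\<in>?P \<inter> - {p. p < N}. 1)"
        unfolding c_def by (rule prod.If_cases) simp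
      also have "\<dots> = C0 ^ card (?P \<inter> {p. p < N})" by simp
      also have "\<dots> \<le> C0 ^ N"
      proof (rule power_increasing[OF _ C0(1)])
        have "card (?P \<inter> {p. p < N}) \<le> card {..<N}" by (rule card_mono) auto
        then show "card (?P \<inter> {p. p < N}) \<le> N" by simp
      qed
      finally show ?thesis .
    qed
    then have "(\<Prod>p\<in>?P. c p) * real n powr \<delta> \<le> C0 ^ N * real n powr \<delta>"
      by (intro mult_right_mono) auto
    finally show ?thesis .
  qed
  moreover have "C0 ^ N > 0" using C0 by simp
  ultimately show ?thesis by blast
qed


lemma tau_taun: assumes "c \<noteq> 0" shows "tau c = taun (nat \<bar>c\<bar>)"
proof -
  have "{d::int. d > 0 \<and> d dvd c} = int ` {d. d dvd nat \<bar>c\<bar>}"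
  proof (intro set_eqI iffI)
    fix d assume "d \<in> {d::int. d > 0 \<and> d dvd c}"
    then have "d > 0" "d dvd \<bar>c\<bar>" by auto
    then show "d \<in> int ` {d. d dvd nat \<bar>c\<bar>}"
      by (metis (mono_tags, lifting) abs_ge_zero image_eqI int_dvd_int_iff mem_Collect_eq nat_0_le order_less_imp_le)
  next
    fix d assume "d \<in> int ` {d. d dvd nat \<bar>c\<bar>}"
    then obtain e where e: "d = int e" "e dvd nat \<bar>c\<bar>" by auto
    then have "int e dvd \<bar>c\<bar>" by (metis abs_ge_zero int_dvd_int_iff nat_0_le)
    moreover have "e > 0" using e assms by (metis dvd_0_left_iff gr0I nat_0_iff abs_le_zero_iff linorder_not_le)
    ultimately show "d \<in> {d::int. d > 0 \<and> d dvd c}" using e by auto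
  qed
  then show ?thesis unfolding tau_def taun_def by (simp add: card_image)
qed

lemma count_T:
  fixes a b d :: int and x1 :: real
  assumes "d > 0" "d dvd c" "c \<noteq> 0" "x1 \<ge> 1"
  shows "real (card {n::int. \<bar>real_of_int n\<bar> \<le> x1 \<and> d dvd a * n + b})
           \<le> 4 * x1 * real_of_int (gcd a c) / real_of_int d + 1"
proof (cases "{n::int. \<bar>real_of_int n\<bar> \<le> x1 \<and> d dvd a * n + b} = {}")
  case True
  have "0 \<le> 4 * x1 * real_of_int (gcd a c) / real_of_int d" using assms by simp
  then show ?thesis unfolding True by simp
next
  case False
  let ?T = "{n::int. \<bar>real_of_int n\<bar> \<le> x1 \<and> d dvd a * n + b}"
  obtain n0 where n0: "n0 \<in> ?T" using False by blast
  define g' where "g' = gcd a d"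
  define q where "q = d div g'"
  have g'pos: "g' > 0" using assms unfolding g'_def by simp
  have dq: "d = g' * q" unfolding q_def g'_def by simp
  have qpos: "q > 0" using dq g'pos assms by (metis pos_imp_zdiv_pos_iff q_def zdvd_imp_le gcd_dvd2 g'_def)
  define a' where "a' = a div g'"
  have aa: "a = g' * a'" unfolding a'_def g'_def by simp
  have cop: "coprime a' q" unfolding a'_def q_def g'_def
    using assms by (intro div_gcd_coprime) auto
  define F where "F = \<lfloor>2 * x1 / real_of_int q\<rfloor>"
  have sub: "?T \<subseteq> (\<lambda>k. n0 + q * k) ` {-F..F}"
  proof
    fix n assume n: "n \<in> ?T"
    have h1: "d dvd a * n + b" "\<bar>real_of_int n\<bar> \<le> x1" using n by auto
    have h2: "d dvd a * n0 + b" "\<bar>real_of_int n0\<bar> \<le> x1" using n0 by auto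
    have "d dvd (a * n + b) - (a * n0 + b)" using h1(1) h2(1) by (rule dvd_diff)
    then have "d dvd a * (n - n0)" by (simp add: algebra_simps)
    then have "g' * q dvd g' * (a' * (n - n0))" using dq aa by (simp add: algebra_simps)
    then have "q dvd a' * (n - n0)" using g'pos by simp
    then have "q dvd n - n0" using cop by (metis coprime_commute coprime_dvd_mult_left_iff coprime_dvd_mult_right_iff)
    then obtain k where k: "n - n0 = q * k" by blast
    have e: "real_of_int q * real_of_int k = real_of_int n - real_of_int n0"
      using k by (metis of_int_diff of_int_mult)
    have "\<bar>real_of_int n - real_of_int n0\<bar> \<le> 2 * x1" using h1(2) h2(2) by arith
    then have "\<bar>real_of_int q * real_of_int k\<bar> \<le> 2 * x1" using e by simp
    then have "real_of_int q * \<bar>real_of_int k\<bar> \<le> 2 * x1" using qpos by (simp add: abs_mult)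
    then have "\<bar>real_of_int k\<bar> \<le> 2 * x1 / real_of_int q" using qpos by (simp add: field_simps)
    then have "\<bar>k\<bar> \<le> F" unfolding F_def by (metis le_floor_iff of_int_abs)
    then have "k \<in> {-F..F}" by auto
    moreover have "n = n0 + q * k" using k by simp
    ultimately show "n \<in> (\<lambda>k. n0 + q * k) ` {-F..F}" by blast
  qed
  have "card ?T \<le> card ((\<lambda>k. n0 + q * k) ` {-F..F})" by (rule card_mono[OF _ sub]) auto
  also have "\<dots> \<le> card {-F..F}" by (rule card_image_le) auto
  finally have "real (card ?T) \<le> real (card {-F..F})" by simp
  also have "\<dots> = 2 * real_of_int F + 1"
  proof -
    have "F \<ge> 0" unfolding F_def using assms qpos by simp
    then show ?thesis by simp
  qed
  also have "\<dots> \<le> 4 * x1 / real_of_int q + 1" unfolding F_def by linarith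
  also have "4 * x1 / real_of_int q = 4 * x1 * real_of_int g' / real_of_int d"
    using dq g'pos by (simp add: field_simps)
  also have "\<dots> \<le> 4 * x1 * real_of_int (gcd a c) / real_of_int d"
  proof -
    have "g' dvd gcd a c" unfolding g'_def using assms by (meson dvd_trans gcd_dvd1 gcd_dvd2 gcd_greatest)
    then have "g' \<le> gcd a c" using assms by (intro zdvd_imp_le) auto
    then show ?thesis using assms by (intro divide_right_mono mult_left_mono) auto
  qed
  finally show ?thesis by simp
qed

theorem lemma2p3:
  fixes A \<epsilon> :: real
  assumes "A \<ge> 1" and "\<epsilon> > 0"
  shows "\<exists>C>0. \<forall>(a::int) (b::int) (c::int) (x1::real) (x2::real).
           a \<noteq> 0 \<longrightarrow> c \<noteq> 0 \<longrightarrow> x1 \<ge> 1 \<longrightarrow> x2 \<ge> 1 \<longrightarrow> real_of_int \<bar>c\<bar> < x2 powr A \<longrightarrow>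
           real (card {n::int. \<bar>real_of_int n\<bar> \<le> x1 \<and> real_of_int (gcd (a * n + b) c) > x2})
             \<le> C * (x1 * real_of_int (gcd a c) / x2 powr (1 - \<epsilon>) + real (tau c))"
proof -
  define \<delta> where "\<delta> = \<epsilon> / A"
  have dpos: "\<delta> > 0" using assms unfolding \<delta>_def by simp
  obtain K where K: "K > 0" "\<And>n::nat. n > 0 \<Longrightarrow> real (taun n) \<le> K * real n powr \<delta>"
    using divisor_bound[OF dpos] by blast
  show ?thesis
  proof (intro exI[of _ "4 * K + 1"] conjI allI impI)
    show "4 * K + 1 > 0" using K by simp
    fix a b c :: int and x1 x2 :: real
    assume a: "a \<noteq> 0" and c: "c \<noteq> 0" and x1: "x1 \<ge> 1" and x2: "x2 \<ge> 1"
      and cx: "real_of_int \<bar>c\<bar> < x2 powr A"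
    define g where "g = gcd a c"
    have gpos: "g > 0" using c unfolding g_def by simp
    define S where "S = {n::int. \<bar>real_of_int n\<bar> \<le> x1 \<and> real_of_int (gcd (a * n + b) c) > x2}"
    define D where "D = {d::int. d > 0 \<and> d dvd c \<and> real_of_int d > x2}"
    define T where "T = (\<lambda>d. {n::int. \<bar>real_of_int n\<bar> \<le> x1 \<and> d dvd a * n + b})"
    have tauK: "real (tau c) \<le> K * x2 powr \<epsilon>"
    proof -
      have t1: "real (tau c) = real (taun (nat \<bar>c\<bar>))" using tau_taun[OF c] by simp
      have t2: "real (taun (nat \<bar>c\<bar>)) \<le> K * real (nat \<bar>c\<bar>) powr \<delta>" by (rule K(2)) (use c in simp)
      have t3: "real (nat \<bar>c\<bar>) = real_of_int \<bar>c\<bar>" by simp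
      have t4: "real_of_int \<bar>c\<bar> powr \<delta> \<le> (x2 powr A) powr \<delta>"
        using cx dpos by (intro powr_mono2) auto
      have t5: "(x2 powr A) powr \<delta> = x2 powr \<epsilon>"
        using assms unfolding \<delta>_def by (simp add: powr_powr)
      have "K * real (nat \<bar>c\<bar>) powr \<delta> \<le> K * x2 powr \<epsilon>"
        unfolding t3 t5[symmetric] using K(1) t4 by (intro mult_left_mono) auto
      then show ?thesis using t1 t2 by linarith
    qed
    have finT: "finite (T d)" for d
    proof -
      have "T d \<subseteq> {\<lfloor>-x1\<rfloor>..\<lceil>x1\<rceil>}" unfolding T_def
        by (auto, linarith+)
      then show ?thesis by (rule finite_subset) simp
    qed
    have DS: "D \<subseteq> {d::int. d > 0 \<and> d dvd c}" unfolding D_def by auto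
    have finDiv: "finite {d::int. d > 0 \<and> d dvd c}"
    proof -
      have "{d::int. d > 0 \<and> d dvd c} \<subseteq> {-\<bar>c\<bar>..\<bar>c\<bar>}" using c
        by (auto dest: dvd_imp_le_int)
      then show ?thesis by (rule finite_subset) simp
    qed
    have finD: "finite D" using DS finDiv by (rule finite_subset)
    have cardD: "card D \<le> tau c" unfolding tau_def using DS finDiv by (rule card_mono[rotated])
    have SU: "S \<subseteq> (\<Union>d\<in>D. T d)"
    proof
      fix n assume n: "n \<in> S"
      let ?d = "gcd (a * n + b) c"
      have "real_of_int ?d > x2" using n unfolding S_def by simp
      moreover have "?d > 0" using c by simp
      ultimately have "?d \<in> D" unfolding D_def by simp
      moreover have "n \<in> T ?d" using n unfolding S_def T_def by simp
      ultimately show "n \<in> (\<Union>d\<in>D. T d)" by blast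
    qed
    define X where "X = 4 * x1 * real_of_int g / x2 + 1"
    have "card S \<le> card (\<Union>d\<in>D. T d)" using SU finD finT by (intro card_mono) auto
    also have "\<dots> \<le> (\<Sum>d\<in>D. card (T d))" using finD by (rule card_UN_le)
    finally have "real (card S) \<le> (\<Sum>d\<in>D. real (card (T d)))"
      by (metis of_nat_le_iff of_nat_sum)
    also have "\<dots> \<le> real (card D) * X"
    proof (rule sum_bounded_above)
      fix d assume d: "d \<in> D"
      then have d0: "d > 0" "d dvd c" "real_of_int d > x2" unfolding D_def by auto
      have "real (card (T d)) \<le> 4 * x1 * real_of_int g / real_of_int d + 1"
        unfolding T_def g_def using count_T[OF d0(1,2) c x1] by simp
      also have "4 * x1 * real_of_int g / real_of_int d \<le> 4 * x1 * real_of_int g / x2"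
        using d0 x1 x2 gpos by (intro divide_left_mono) auto
      finally show "real (card (T d)) \<le> X" unfolding X_def by simp
    qed
    also have "\<dots> \<le> real (tau c) * X"
      using cardD x1 x2 gpos unfolding X_def by (intro mult_right_mono) auto
    also have "\<dots> = real (tau c) * (4 * x1 * real_of_int g / x2) + real (tau c)"
      unfolding X_def by (simp add: algebra_simps)
    also have "real (tau c) * (4 * x1 * real_of_int g / x2) \<le> K * x2 powr \<epsilon> * (4 * x1 * real_of_int g / x2)"
      using tauK x1 x2 gpos by (intro mult_right_mono) auto
    also have "K * x2 powr \<epsilon> * (4 * x1 * real_of_int g / x2) = 4 * K * (x1 * real_of_int g / x2 powr (1 - \<epsilon>))"
    proof -
      have "x2 powr (1 - \<epsilon>) = x2 / x2 powr \<epsilon>" using x2 by (simp add: powr_diff)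
      then show ?thesis using x2 by (simp add: field_simps)
    qed
    finally have fin: "real (card S) \<le> 4 * K * (x1 * real_of_int g / x2 powr (1 - \<epsilon>)) + real (tau c)" by simp
    have Y0: "0 \<le> x1 * real_of_int g / x2 powr (1 - \<epsilon>)" using x1 gpos by simp
    have key: "4 * K * Y + t \<le> (4 * K + 1) * (Y + t)" if "0 \<le> Y" "0 \<le> t" for Y t :: real
      using that K(1) by (simp add: algebra_simps)
    have "4 * K * (x1 * real_of_int g / x2 powr (1 - \<epsilon>)) + real (tau c)
       \<le> (4 * K + 1) * (x1 * real_of_int g / x2 powr (1 - \<epsilon>) + real (tau c))"
      by (rule key[OF Y0]) simp
    with fin show "real (card {n::int. \<bar>real_of_int n\<bar> \<le> x1 \<and> real_of_int (gcd (a * n + b) c) > x2})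
             \<le> (4 * K + 1) * (x1 * real_of_int (gcd a c) / x2 powr (1 - \<epsilon>) + real (tau c))"
      unfolding S_def g_def by linarith
  qed
qed

end
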